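(* Let $\Phi:\mathbb{C}^2\to\mathbb{C}^3$ be the cross cap $\Phi(s,t)=(s^2,st,t)$. Then $\Omega_{\mathbb{C}}(\Phi)=[u]$.
   Context: For a holomorphic germ $\Phi:(\mathbb{C}^2,0)\to(\mathbb{C}^3,0)$ with $\operatorname{rank} d\Phi_z=2$ for $z\neq0$, the complex Smale invariant $\Omega_{\mathbb{C}}(\Phi)$ is the homotopy class of $d\Phi|_{S^3}:S^3\to V_2(\mathbb{C}^3)$ (complex Stiefel manifold of 2-frames in $\mathbb{C}^3$, via the standard trivializations of $T\mathbb{C}^2$, $T\mathbb{C}^3$), viewed in $\pi_3(V_2(\mathbb{C}^3))\cong\pi_3(U(3))\cong\pi_3(U)$ (the first isomorphism induced by the projection $U(3)\to V_2(\mathbb{C}^3)$). $u:S^3\to U(2)\subset U$ is $u_q=\begin{pmatrix}z&-\bar w\\ w&\bar z\end{pmatrix}$ for the unit quaternion $q=z+wj$, with $\mathbb{C}^2\cong\mathbb{H}$ via $(z,w)\leftrightarrow z+wj$; $[u]$ generates $\pi_3(U)$. *)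

theory Defs
  imports "HOL-Analysis.Analysis"
begin

text \<open>Complex Stiefel manifold of 2-frames in C^3 (frames = pairs of
  C-linearly independent vectors; homotopy equivalent to the orthonormal one).\<close>
definition stiefel2 :: "((complex^3) \<times> (complex^3)) set" where
  "stiefel2 = {(a, b). \<forall>\<alpha> \<beta> :: complex. \<alpha> *s a + \<beta> *s b = 0 \<longrightarrow> \<alpha> = 0 \<and> \<beta> = 0}"

definition dframe :: "(complex \<times> complex \<Rightarrow> complex^3) \<Rightarrow> complex \<times> complex \<Rightarrow> (complex^3) \<times> (complex^3)" where
  "dframe \<Phi> p = ((\<chi> i. deriv (\<lambda>x. \<Phi> (x, snd p) $ i) (fst p)),
                  (\<chi> i. deriv (\<lambda>y. \<Phi> (fst p, y) $ i) (snd p)))"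

definition crosscap :: "complex \<times> complex \<Rightarrow> complex^3" where
  "crosscap p = vector [(fst p)^2, fst p * snd p, snd p]"

text \<open>The generator: q = z + w j maps to u_q = [[z, -conj w],[w, conj z]] in U(2),
  stabilised to diag(u_q,1) in U(3) and projected to V_2(C^3) by taking the
  first two columns.\<close>
definition u_frame :: "complex \<times> complex \<Rightarrow> (complex^3) \<times> (complex^3)" where
  "u_frame p = (vector [fst p, snd p, 0], vector [- cnj (snd p), cnj (fst p), 0])"

end

theory Submission
  imports Defs
begin

lemma vec3_chi: "(vector [a,b,c] :: 'a::zero^3) = (\<chi> i. if i = 1 then a else if i = 2 then b else c)"
proof (rule vec_eq_iff[THEN iffD2], rule allI)
  fix i :: 3
  consider "i = 1" | "i = 2" | "i = 3" using exhaust_3 by blast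
  then show "vector [a,b,c] $ i = (\<chi> i. if i = 1 then a else if i = 2 then b else c) $ i"
    by cases simp_all
qed

lemma continuous_on_vector3[continuous_intros]:
  assumes "continuous_on S f" "continuous_on S g" "continuous_on S h"
  shows "continuous_on S (\<lambda>x. (vector [f x, g x, h x] :: 'a::{zero,topological_space}^3))"
  unfolding vec3_chi
proof (rule continuous_on_vec_lambda)
  fix i :: 3
  show "continuous_on S (\<lambda>x. if i = 1 then f x else if i = 2 then g x else h x)"
    by (cases "i = 1"; cases "i = 2") (simp_all add: assms)
qed

lemma dframe_crosscap: "dframe crosscap p = (vector [2 * fst p, snd p, 0], vector [0, fst p, 1])"
proof -
  have A: "(\<chi> i. deriv (\<lambda>x. crosscap (x, snd p) $ i) (fst p)) = (vector [2 * fst p, snd p, 0] :: complex^3)"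
  proof (rule vec_eq_iff[THEN iffD2], intro allI)
    fix i :: 3
    consider "i = 1" | "i = 2" | "i = 3" using exhaust_3 by blast
    then show "(\<chi> i. deriv (\<lambda>x. crosscap (x, snd p) $ i) (fst p)) $ i = (vector [2 * fst p, snd p, 0] :: complex^3) $ i"
    proof cases
      case 1
      have "((\<lambda>x. x^2) has_field_derivative 2 * fst p) (at (fst p))"
        by (auto intro!: derivative_eq_intros)
      then show ?thesis using 1 by (simp add: crosscap_def DERIV_imp_deriv)
    next
      case 2
      have "((\<lambda>x. x * snd p) has_field_derivative snd p) (at (fst p))"
        by (auto intro!: derivative_eq_intros)
      then show ?thesis using 2 by (simp add: crosscap_def DERIV_imp_deriv)
    next
      case 3 then show ?thesis by (simp add: crosscap_def)
    qed
  qed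
  have B: "(\<chi> i. deriv (\<lambda>y. crosscap (fst p, y) $ i) (snd p)) = (vector [0, fst p, 1] :: complex^3)"
  proof (rule vec_eq_iff[THEN iffD2], intro allI)
    fix i :: 3
    consider "i = 1" | "i = 2" | "i = 3" using exhaust_3 by blast
    then show "(\<chi> i. deriv (\<lambda>y. crosscap (fst p, y) $ i) (snd p)) $ i = (vector [0, fst p, 1] :: complex^3) $ i"
    proof cases
      case 1 then show ?thesis by (simp add: crosscap_def)
    next
      case 2
      have "((\<lambda>x. fst p * x) has_field_derivative fst p) (at (snd p))"
        by (auto intro!: derivative_eq_intros)
      then show ?thesis using 2 by (simp add: crosscap_def DERIV_imp_deriv)
    next
      case 3 then show ?thesis by (simp add: crosscap_def)
    qed
  qed
  show ?thesis unfolding dframe_def A B ..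
qed

definition H :: "real \<times> (complex \<times> complex) \<Rightarrow> (complex^3) \<times> (complex^3)" where
  "H = (\<lambda>(l, p). (vector [complex_of_real (2 - l) * fst p, snd p, 0],
                    vector [- complex_of_real l * cnj (snd p),
                            complex_of_real (1 - l) * fst p + complex_of_real l * cnj (fst p),
                            complex_of_real (1 - l)]))"

lemma H_cont: "continuous_on UNIV H"
  unfolding H_def case_prod_unfold
  by (intro continuous_intros)

lemma H0: "H (0, p) = dframe crosscap p"
  unfolding H_def dframe_crosscap prod.case
  by (simp only: diff_zero of_real_0 of_real_1 of_real_numeral mult_zero_left minus_zero add_0_right mult_1_left)

lemma H1: "H (1, p) = u_frame p"
proof -
  have e: "(2::real) - 1 = 1" by simp
  show ?thesis
    unfolding H_def u_frame_def prod.case e diff_self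
    by (simp only: of_real_0 of_real_1 mult_zero_left minus_zero add_0_left mult_1_left mult_minus_left)
qed

lemma H_in:
  assumes l: "0 \<le> l" "l \<le> 1" and p: "p \<in> sphere (0 :: complex \<times> complex) 1"
  shows "H (l, p) \<in> stiefel2"
proof -
  obtain s t where st: "p = (s, t)" by (cases p)
  have n: "norm s ^ 2 + norm t ^ 2 = 1" using p st by (simp add: norm_Pair)
  have nz: "s \<noteq> 0 \<or> t \<noteq> 0" using n by auto
  have n2: "s * cnj s + t * cnj t = 1"
  proof -
    have "s * cnj s + t * cnj t = complex_of_real (norm s ^ 2 + norm t ^ 2)"
      by (simp only: of_real_add complex_norm_square)
    then show ?thesis using n by simp
  qed
  define A :: "complex^3" where "A = vector [complex_of_real (2 - l) * s, t, 0]"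
  define B :: "complex^3" where "B = vector [- (complex_of_real l * cnj t), complex_of_real (1 - l) * s + complex_of_real l * cnj s, complex_of_real (1 - l)]"
  have key: "\<forall>\<alpha> \<beta> :: complex. \<alpha> *s A + \<beta> *s B = 0 \<longrightarrow> \<alpha> = 0 \<and> \<beta> = 0"
  proof (intro allI impI)
    fix \<alpha> \<beta> :: complex
    assume eq0: "\<alpha> *s A + \<beta> *s B = 0"
    have eq: "\<alpha> *s vector [complex_of_real (2 - l) * s, t, 0] +
          \<beta> *s vector [- (complex_of_real l * cnj t), complex_of_real (1 - l) * s + complex_of_real l * cnj s, complex_of_real (1 - l)] = (0::complex^3)"
      using eq0 unfolding A_def B_def .
    have c1: "\<alpha> * (complex_of_real (2 - l) * s) + \<beta> * (- (complex_of_real l * cnj t)) = 0"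
      using arg_cong[OF eq, of "\<lambda>v. v $ 1"] by simp
    have c2: "\<alpha> * t + \<beta> * (complex_of_real (1 - l) * s + complex_of_real l * cnj s) = 0"
      using arg_cong[OF eq, of "\<lambda>v. v $ 2"] by simp
    have c3: "\<beta> * complex_of_real (1 - l) = 0"
      using arg_cong[OF eq, of "\<lambda>v. v $ 3"] by simp
    show "\<alpha> = 0 \<and> \<beta> = 0"
    proof (cases "l = 1")
      case True
      have d1: "\<alpha> * s - \<beta> * cnj t = 0" using c1 True by simp
      have d2: "\<alpha> * t + \<beta> * cnj s = 0" using c2 True by simp
      have "\<alpha> = \<alpha> * (s * cnj s + t * cnj t)" using n2 by simp
      also have "\<dots> = cnj s * (\<alpha> * s - \<beta> * cnj t) + cnj t * (\<alpha> * t + \<beta> * cnj s)"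
        by (simp add: algebra_simps)
      also have "\<dots> = 0" using d1 d2 by simp
      finally have a0: "\<alpha> = 0" .
      then have "\<beta> * cnj t = 0" "\<beta> * cnj s = 0" using d1 d2 by simp_all
      then have "\<beta> = 0" using nz by (metis complex_cnj_zero_iff mult_eq_0_iff)
      with a0 show ?thesis by simp
    next
      case False
      then have b0: "\<beta> = 0" using c3 by simp
      have "2 - l \<noteq> 0" using l by simp
      then have ne: "complex_of_real (2 - l) \<noteq> 0" by (simp only: of_real_eq_0_iff not_False_eq_True)
      have "\<alpha> * (complex_of_real (2 - l) * s) = 0" using c1 b0 by simp
      then have "\<alpha> * s = 0" using ne by (metis mult_eq_0_iff)
      moreover have "\<alpha> * t = 0" using c2 b0 by simp
      ultimately have "\<alpha> = 0" using nz by (metis mult_eq_0_iff)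
      with b0 show ?thesis by simp
    qed
  qed
  have HAB: "H (l, p) = (A, B)" unfolding H_def st A_def B_def prod.case fst_conv snd_conv by (simp only: mult_minus_left)
  show ?thesis unfolding HAB stiefel2_def mem_Collect_eq prod.case by (rule key)
qed

theorem proposition4p6:
  shows "homotopic_with_canon (\<lambda>_. True) (sphere (0 :: complex \<times> complex) 1) stiefel2
           (dframe crosscap) u_frame"
  unfolding homotopic_with_def
proof (intro exI conjI allI ballI)
  show "continuous_map (prod_topology (top_of_set {0..1}) (top_of_set (sphere (0 :: complex \<times> complex) 1))) (top_of_set stiefel2) H"
  proof -
    have c: "continuous_on ({0..1} \<times> sphere 0 1) H" using H_cont continuous_on_subset by blast
    have f: "H \<in> {0..1} \<times> sphere 0 1 \<rightarrow> stiefel2"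
    proof (rule funcsetI)
      fix x assume xin: "x \<in> {0..1::real} \<times> sphere (0::complex\<times>complex) 1"
      obtain l p where x: "x = (l, p)" by (cases x)
      have lp: "l \<in> {0..1}" "p \<in> sphere 0 1" using xin unfolding x mem_Times_iff fst_conv snd_conv by blast+
      have l0: "0 \<le> l" "l \<le> 1" using lp(1) unfolding atLeastAtMost_iff by blast+
      show "H x \<in> stiefel2" unfolding x by (rule H_in[OF l0 lp(2)])
    qed
    have E: "prod_topology (top_of_set {0..1::real}) (top_of_set (sphere (0::complex\<times>complex) 1))
          = top_of_set ({0..1} \<times> sphere 0 1)"
      by (simp only: subtopology_Times[symmetric] prod_topology_euclidean)
    have c': "continuous_map (top_of_set ({0..1::real} \<times> sphere (0::complex\<times>complex) 1)) euclidean H"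
      using c by (simp only: continuous_map_iff_continuous)
    have f': "H \<in> topspace (top_of_set ({0..1::real} \<times> sphere (0::complex\<times>complex) 1)) \<rightarrow> stiefel2"
      using f by (simp only: topspace_euclidean_subtopology)
    show ?thesis unfolding E using c' f' by (simp only: continuous_map_in_subtopology conj_absorb simp_thms)
  qed
  show "H (0, x) = dframe crosscap x" for x
    by (rule H0)
  show "H (1, x) = u_frame x" for x
    by (rule H1)
next
  show "True" for t :: real by (rule TrueI)
qed

end
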